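(* Let $\sigma>0$, $\lambda_1,\lambda_2>0$, $m_g\ge1$. Suppose $\boldsymbol\beta_g\mid\tau_{g1}^2,\dots,\tau_{gm_g}^2,\gamma_g^2,\sigma^2\sim N_{m_g}(\mathbf 0,\sigma^2\mathbf V_g)$ with $\mathbf V_g=\mathrm{diag}\{(\tau_{gj}^{-2}+\gamma_g^{-2})^{-1}, j=1,\dots,m_g\}$, and $(\tau_{g1}^2,\dots,\tau_{gm_g}^2,\gamma_g^2)\in(0,\infty)^{m_g+1}$ has density $$\pi(\tau^2_{g1},\dots,\tau^2_{gm_g},\gamma^2_g)=c_g(\lambda_1^2,\lambda_2^2)\prod_{j=1}^{m_g}\Big[(\tau^2_{gj})^{-1/2}\Big(\frac1{\tau^2_{gj}}+\frac1{\gamma^2_g}\Big)^{-1/2}\Big](\gamma_g^2)^{-1/2}\exp\Big\{-\frac{\lambda_1^2}{2}\sum_{j=1}^{m_g}\tau^2_{gj}-\frac{\lambda_2^2}{2}\gamma_g^2\Big\}.$$ Then this density is integrable (so a normalizing constant $c_g(\lambda_1^2,\lambda_2^2)\in(0,\infty)$ exists, i.e., the prior is proper), and the marginal prior of $\boldsymbol\beta_g$ satisfies $$\pi(\boldsymbol\beta_g\mid\sigma^2)\propto\exp\Big\{-\frac{\lambda_1}{\sigma}\|\boldsymbol\beta_g\|_1-\frac{\lambda_2}{\sigma}\|\boldsymbol\beta_g\|_2\Big\}.$$ *)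

theory Defs
  imports "HOL-Probability.Probability"
begin

text \<open>Group size m_g is the cardinality of the finite index type 'n (so m_g >= 1).
  A point of the hyperparameter space is a pair (t, g) with t $ j = tau_{gj}^2 and g = gamma_g^2.\<close>

definition hyper_dom :: "((real^'n) \<times> real) set" where
  "hyper_dom = {(t, g). (\<forall>j. 0 < t $ j) \<and> 0 < g}"

definition prior_unnorm :: "real \<Rightarrow> real \<Rightarrow> (real^'n) \<times> real \<Rightarrow> real" where
  "prior_unnorm l1 l2 = (\<lambda>(t, g).
     if (t, g) \<in> hyper_dom then
       (\<Prod>j\<in>UNIV. (t $ j) powr (-1/2) * (1 / t $ j + 1 / g) powr (-1/2))
       * g powr (-1/2) * exp (- (l1\<^sup>2 / 2) * (\<Sum>j\<in>UNIV. t $ j) - (l2\<^sup>2 / 2) * g)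
     else 0)"

text \<open>Density of N_{m_g}(0, sigma^2 V_g) at beta, V_g = diag((tau_j^-2 + gamma^-2)^-1);
  with diagonal covariance this is the product of univariate normal densities
  (normal_density takes the standard deviation).\<close>
definition cond_beta_density :: "real \<Rightarrow> (real^'n) \<times> real \<Rightarrow> real^'n \<Rightarrow> real" where
  "cond_beta_density \<sigma> = (\<lambda>(t, g) \<beta>.
     \<Prod>j\<in>UNIV. normal_density 0 (sqrt (\<sigma>\<^sup>2 * inverse (1 / t $ j + 1 / g))) (\<beta> $ j))"

end

theory Submission
  imports Defs
begin
lemma borel_measurable_nth_comp[measurable (raw)]:
  fixes f :: "'a \<Rightarrow> real^'n"
  shows "f \<in> borel_measurable M \<Longrightarrow> (\<lambda>x. f x $ i) \<in> borel_measurable M"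
  using measurable_compose[OF _ borel_measurable_nth] by blast

lemma vec_prod_nn:
  fixes f :: "'n::finite \<Rightarrow> real \<Rightarrow> ennreal"
  assumes [measurable]: "\<And>j. f j \<in> borel_measurable borel"
  shows "(\<integral>\<^sup>+x. (\<Prod>j\<in>UNIV. f j (x $ j)) \<partial>(lborel::(real^'n) measure)) = (\<Prod>j\<in>UNIV. \<integral>\<^sup>+t. f j t \<partial>lborel)"
proof -
  have e1: "\<And>x::real^'n. (\<Prod>j\<in>UNIV. f j (x$j)) = (\<Prod>b\<in>Basis. f (axis_index b) (x \<bullet> b))"
    by (simp add: Basis_vec_def UNION_singleton_eq_range prod.reindex axis_eq_axis inj_on_def inner_axis)
  have e2: "(\<Prod>j\<in>UNIV. \<integral>\<^sup>+t. f j t \<partial>lborel) = (\<Prod>b\<in>(Basis::(real^'n) set). \<integral>\<^sup>+t. f (axis_index b) t \<partial>lborel)"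
    by (simp add: Basis_vec_def UNION_singleton_eq_range prod.reindex axis_eq_axis inj_on_def)
  show ?thesis unfolding e1 e2 by (rule nn_integral_lborel_prod) auto
qed

lemma pair_prod_nn:
  fixes F :: "'a::euclidean_space \<Rightarrow> ennreal" and H :: "'b::euclidean_space \<Rightarrow> ennreal"
  assumes [measurable]: "F \<in> borel_measurable borel" "H \<in> borel_measurable borel"
  shows "(\<integral>\<^sup>+x. F (fst x) * H (snd x) \<partial>lborel) = (\<integral>\<^sup>+t. F t \<partial>lborel) * (\<integral>\<^sup>+g. H g \<partial>lborel)"
proof -
  have "(\<integral>\<^sup>+x. F (fst x) * H (snd x) \<partial>lborel) = (\<integral>\<^sup>+x. F (fst x) * H (snd x) \<partial>(lborel \<Otimes>\<^sub>M lborel))"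
    by (simp add: lborel_prod)
  also have "\<dots> = (\<integral>\<^sup>+t. \<integral>\<^sup>+g. F t * H g \<partial>lborel \<partial>lborel)"
    by (subst lborel.nn_integral_fst[symmetric]) auto
  also have "\<dots> = (\<integral>\<^sup>+t. F t * (\<integral>\<^sup>+g. H g \<partial>lborel) \<partial>lborel)"
    by (simp add: nn_integral_cmult)
  also have "\<dots> = (\<integral>\<^sup>+t. F t \<partial>lborel) * (\<integral>\<^sup>+g. H g \<partial>lborel)"
    by (simp add: nn_integral_multc)
  finally show ?thesis .
qed

lemma meas_prior: "prior_unnorm l1 l2 \<in> borel_measurable (borel :: ((real^'n) \<times> real) measure)"
  unfolding prior_unnorm_def hyper_dom_def borel_prod[symmetric] by measurable

lemma meas_phi: "(\<lambda>t::real. indicator {0<..} t * (c * (t powr (-1/2) * exp (-a/t - b*t)))) \<in> borel_measurable borel"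
  by measurable


lemma half_gauss: "((\<lambda>x::real. exp (-x\<^sup>2)) has_integral sqrt pi / 2) {0..}"
proof -
  have h: "has_bochner_integral lborel (\<lambda>x. indicator {0..} x *\<^sub>R exp (- x\<^sup>2)) (sqrt pi / 2)"
    by (rule gaussian_moment_0)
  have "((\<lambda>x::real. indicator {0..} x *\<^sub>R exp (- x\<^sup>2)) has_integral sqrt pi / 2) UNIV"
    using has_integral_integral_lborel h unfolding has_bochner_integral_iff by metis
  then have "((\<lambda>x::real. if x \<in> {0..} then exp (- x\<^sup>2) else 0) has_integral sqrt pi / 2) UNIV"
    by (rule has_integral_eq[rotated]) (simp add: indicator_def)
  then show ?thesis using has_integral_restrict_UNIV[of "{0..}" "\<lambda>x::real. exp(-x\<^sup>2)"] by simp
qed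

lemma L1:
  fixes k :: real assumes k: "k > 0"
  shows "((\<lambda>v. (1 + k/v\<^sup>2) * exp (-(v - k/v)\<^sup>2)) has_integral sqrt pi / 2) {sqrt k..}"
proof -
  let ?S = "{sqrt k..}"
  have sk: "sqrt k > 0" using k by simp
  have img: "(\<lambda>v. v - k/v) ` ?S = {0..}"
  proof
    show "(\<lambda>v. v - k/v) ` ?S \<subseteq> {0..}"
    proof clarify
      fix v assume v: "sqrt k \<le> v"
      then have vp: "v > 0" using sk by linarith
      have "k \<le> v\<^sup>2" using v k by (metis real_le_lsqrt real_sqrt_ge_zero sqrt_le_D)
      then have "k / v \<le> v" using vp by (simp add: divide_le_eq power2_eq_square)
      then show "0 \<le> v - k/v" by simp
    qed
    show "{0..} \<subseteq> (\<lambda>v. v - k/v) ` ?S"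
    proof
      fix w :: real assume w: "w \<in> {0..}"
      define s where "s = sqrt (w\<^sup>2 + 4*k)"
      have s2: "s\<^sup>2 = w\<^sup>2 + 4*k" unfolding s_def using k by simp
      have sge: "s \<ge> 2 * sqrt k"
      proof -
        have "sqrt (4*k) \<le> s" unfolding s_def by (rule real_sqrt_le_mono) simp
        moreover have "sqrt (4*k) = 2 * sqrt k" by (simp add: real_sqrt_mult)
        ultimately show ?thesis by simp
      qed
      define v where "v = (w + s)/2"
      have vge: "v \<ge> sqrt k" unfolding v_def using w sge by simp
      have vp: "v > 0" using vge sk by linarith
      have "v\<^sup>2 - w * v = k" unfolding v_def using s2 by (simp add: power2_eq_square field_simps)
      then have "v - k/v = w" using vp by (simp add: field_simps power2_eq_square)
      then show "w \<in> (\<lambda>v. v - k/v) ` ?S" using vge by force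
    qed
  qed
  have der: "((\<lambda>v. v - k/v) has_field_derivative (1 + k/v\<^sup>2)) (at v within ?S)" if "v \<in> ?S" for v
  proof -
    have "v > 0" using that sk by (metis atLeast_iff less_le_trans)
    then show ?thesis
      by (auto intro!: derivative_eq_intros simp: power2_eq_square field_simps)
  qed
  have inj: "inj_on (\<lambda>v. v - k/v) ?S"
  proof (rule inj_onI)
    fix x y assume x: "x \<in> ?S" and y: "y \<in> ?S" and e: "x - k/x = y - k/y"
    have xp: "x > 0" and yp: "y > 0" using x y sk by (metis atLeast_iff less_le_trans)+
    have "(x - y) * (x*y + k) = 0" using e xp yp by (simp add: field_simps)
    moreover have "x*y + k > 0" using xp yp k by (simp add: add_pos_pos)
    ultimately show "x = y" by simp
  qed
  have hg: "(\<lambda>x::real. exp (-x\<^sup>2)) absolutely_integrable_on {0..} \<and> integral {0..} (\<lambda>x::real. exp (-x\<^sup>2)) = sqrt pi / 2"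
    using half_gauss nonnegative_absolutely_integrable_1[of "\<lambda>x::real. exp (-x\<^sup>2)" "{0..}"]
    by (auto simp: has_integral_integrable_integral)
  have "(\<lambda>x. \<bar>1 + k/x\<^sup>2\<bar> * exp (- (x - k/x)\<^sup>2)) absolutely_integrable_on ?S \<and>
        integral ?S (\<lambda>x. \<bar>1 + k/x\<^sup>2\<bar> * exp (- (x - k/x)\<^sup>2)) = sqrt pi / 2"
    using has_absolute_integral_change_of_variables_1'[of ?S "\<lambda>v. v - k/v" "\<lambda>v. 1 + k/v\<^sup>2"
       "\<lambda>x. exp (-x\<^sup>2)" "sqrt pi / 2"] der inj img hg by auto
  moreover have "\<And>x. \<bar>1 + k/x\<^sup>2\<bar> = 1 + k/x\<^sup>2" using k by simp
  ultimately show ?thesis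
    using absolutely_integrable_on_def has_integral_integrable_integral by fastforce
qed

lemma Jpos:
  fixes k :: real assumes k: "k > 0"
  shows "((\<lambda>v. exp (-(v - k/v)\<^sup>2)) has_integral sqrt pi / 2) {0<..}"
proof -
  let ?S = "{sqrt k..}"
  let ?e = "\<lambda>v. exp (-(v - k/v)\<^sup>2)"
  let ?p = "\<lambda>v. (k/v\<^sup>2) * exp (-(v - k/v)\<^sup>2)"
  let ?q = "\<lambda>v. (1 + k/v\<^sup>2) * exp (-(v - k/v)\<^sup>2)"
  have sk: "sqrt k > 0" using k by simp
  have Spos: "\<And>v. v \<in> ?S \<Longrightarrow> v > 0" using sk by (metis atLeast_iff less_le_trans)
  have Sleb: "?S \<in> sets lebesgue" by simp
  have qint: "?q integrable_on ?S" using L1[OF k] by blast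
  have cont: "continuous_on ?S f" if "\<And>v. v > 0 \<Longrightarrow> isCont f v" for f :: "real \<Rightarrow> real"
    using that Spos by (intro continuous_at_imp_continuous_on) auto
  have pabs: "?p absolutely_integrable_on ?S"
  proof (rule measurable_bounded_by_integrable_imp_absolutely_integrable[OF _ Sleb qint])
    show "?p \<in> borel_measurable (lebesgue_on ?S)"
      by (rule continuous_imp_measurable_on_sets_lebesgue[OF cont Sleb]) (auto intro!: continuous_intros)
    show "norm (?p x) \<le> ?q x" if "x \<in> ?S" for x
      using k by (simp add: distrib_right)
  qed
  have eabs: "?e absolutely_integrable_on ?S"
  proof (rule measurable_bounded_by_integrable_imp_absolutely_integrable[OF _ Sleb qint])
    show "?e \<in> borel_measurable (lebesgue_on ?S)"
      by (rule continuous_imp_measurable_on_sets_lebesgue[OF cont Sleb]) (auto intro!: continuous_intros)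
    show "norm (?e x) \<le> ?q x" if "x \<in> ?S" for x
      using k by (simp add: distrib_right)
  qed
  have img: "(\<lambda>s. k/s) ` ?S = {0<..sqrt k}"
  proof
    show "(\<lambda>s. k/s) ` ?S \<subseteq> {0<..sqrt k}"
    proof clarify
      fix s assume s: "sqrt k \<le> s"
      then have sp: "s > 0" using sk by linarith
      have "k = sqrt k * sqrt k" using k by simp
      also have "\<dots> \<le> sqrt k * s" by (rule mult_left_mono) (use s sk in auto)
      finally have "k / s \<le> sqrt k" using sp by (simp add: divide_le_eq)
      then show "k/s \<in> {0<..sqrt k}" using sp k by simp
    qed
    show "{0<..sqrt k} \<subseteq> (\<lambda>s. k/s) ` ?S"
    proof
      fix v assume v: "v \<in> {0<..sqrt k}"
      then have vp: "v > 0" and vle: "v \<le> sqrt k" by auto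
      have "sqrt k * v \<le> sqrt k * sqrt k" by (rule mult_left_mono) (use vle sk in auto)
      also have "\<dots> = k" using k by simp
      finally have "sqrt k \<le> k / v" using vp by (simp add: le_divide_eq mult.commute)
      moreover have "k / (k / v) = v" using k by simp
      ultimately show "v \<in> (\<lambda>s. k/s) ` ?S" by (metis atLeast_iff image_eqI)
    qed
  qed
  have der: "((\<lambda>s. k/s) has_field_derivative (- k/s\<^sup>2)) (at s within ?S)" if "s \<in> ?S" for s
  proof -
    have "s > 0" using that Spos by blast
    then show ?thesis
      by (auto intro!: derivative_eq_intros simp: power2_eq_square field_simps)
  qed
  have inj: "inj_on (\<lambda>s. k/s) ?S"
    by (rule inj_onI) (use k Spos in \<open>auto simp: field_simps\<close>)
  have feq: "(\<lambda>x. \<bar>- k/x\<^sup>2\<bar> * ?e (k/x)) = ?p"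
  proof
    fix x
    have "k / (k / x) = x" using k by simp
    then show "\<bar>- k/x\<^sup>2\<bar> * ?e (k/x) = ?p x" using k by (simp add: power2_commute)
  qed
  have "?e absolutely_integrable_on {0<..sqrt k} \<and> integral {0<..sqrt k} ?e = integral ?S ?p"
    using has_absolute_integral_change_of_variables_1'[OF Sleb der inj, of ?e "integral ?S ?p"]
      pabs feq img by simp
  then have h1: "(?e has_integral integral ?S ?p) {0<..sqrt k}"
    using absolutely_integrable_on_def has_integral_integrable_integral by fastforce
  have h2: "(?e has_integral integral ?S ?e) ?S"
    using eabs absolutely_integrable_on_def has_integral_integrable_integral by fastforce
  have un: "{0<..sqrt k} \<union> ?S = {0<..}" using sk Spos by fastforce
  have neg: "negligible ({0<..sqrt k} \<inter> ?S)"
  proof -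
    have "{0<..sqrt k} \<inter> ?S = {sqrt k}" using sk by auto
    then show ?thesis by simp
  qed
  have "(?e has_integral (integral ?S ?p + integral ?S ?e)) {0<..}"
    using has_integral_Un[OF h1 h2 neg] un by simp
  moreover have "integral ?S ?p + integral ?S ?e = integral ?S ?q"
  proof -
    have "integral ?S ?p + integral ?S ?e = integral ?S (\<lambda>v. ?p v + ?e v)"
      using pabs eabs by (simp add: integral_add absolutely_integrable_on_def)
    also have "\<dots> = integral ?S ?q" by (simp add: distrib_right add.commute)
    finally show ?thesis .
  qed
  moreover have "integral ?S ?q = sqrt pi / 2" using L1[OF k] by blast
  ultimately show ?thesis by metis
qed

lemma J:
  fixes k :: real assumes k: "k \<ge> 0"
  shows "((\<lambda>v. exp (-(v - k/v)\<^sup>2)) has_integral sqrt pi / 2) {0<..}"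
proof (cases "k = 0")
  case True
  have "((\<lambda>v::real. exp (-v\<^sup>2)) has_integral sqrt pi / 2) {0<..}"
  proof (subst has_integral_spike_set_eq)
    show "negligible {x \<in> {0<..} - {0..}. exp (-x\<^sup>2) \<noteq> (0::real)}"
      by (rule negligible_subset[of "{}"]) auto
    show "negligible {x \<in> {0..} - {0<..}. exp (-x\<^sup>2) \<noteq> (0::real)}"
      by (rule negligible_subset[of "{0}"]) auto
  qed (rule half_gauss)
  then show ?thesis using True by simp
next
  case False
  then show ?thesis using Jpos k by simp
qed

lemma powr_mhalf: "(x::real) > 0 \<Longrightarrow> x powr (-1/2) = 1 / sqrt x"
  by (simp add: powr_minus_divide powr_half_sqrt[symmetric] powr_minus)

lemma Ipow:
  fixes a b :: real assumes a: "a \<ge> 0" and b: "b > 0"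
  shows "((\<lambda>t. t powr (-1/2) * exp (-a/t - b*t)) has_integral sqrt (pi/b) * exp (-2* sqrt(a*b))) {0<..}"
proof -
  define k where "k = sqrt (a*b)"
  have k0: "k \<ge> 0" unfolding k_def using a b by simp
  have kk: "k\<^sup>2 = a*b" unfolding k_def using a b by simp
  define K where "K = 2 / sqrt b * exp (-2*k)"
  let ?S = "{0<..} :: real set"
  let ?f = "\<lambda>t. t powr (-1/2) * exp (-a/t - b*t)"
  let ?g = "\<lambda>v. v\<^sup>2 / b"
  let ?g' = "\<lambda>v. 2 * v / b"
  have hJ: "((\<lambda>v. K * exp (-(v - k/v)\<^sup>2)) has_integral K * (sqrt pi / 2)) ?S"
    using has_integral_mult_right[OF J[OF k0]] by simp
  have eq: "\<bar>?g' v\<bar> * ?f (?g v) = K * exp (-(v - k/v)\<^sup>2)" if v: "v \<in> ?S" for v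
  proof -
    have vp: "v > 0" using v by simp
    have p1: "(v\<^sup>2/b) powr (-1/2) = sqrt b / v"
      using powr_mhalf[of "v\<^sup>2/b"] vp b by (simp add: real_sqrt_divide)
    have e1: "-a/(v\<^sup>2/b) - b*(v\<^sup>2/b) = -2*k + (-(v - k/v)\<^sup>2)"
    proof -
      have "-(v - k/v)\<^sup>2 = -v\<^sup>2 + 2*k - k\<^sup>2/v\<^sup>2"
        using vp by (simp add: power2_eq_square field_simps)
      then show ?thesis using kk vp b by (simp add: field_simps power2_eq_square)
    qed
    have f1: "?f (?g v) = (sqrt b / v) * (exp (-2*k) * exp (-(v - k/v)\<^sup>2))"
      by (simp only: p1 e1 exp_add)
    have "\<bar>?g' v\<bar> * ?f (?g v) = (2 * v/b) * (sqrt b / v) * exp (-2*k) * exp (-(v - k/v)\<^sup>2)"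
      unfolding f1 using vp b by simp
    also have "(2 * v/b) * (sqrt b / v) = 2 / sqrt b"
    proof -
      have "b = sqrt b * sqrt b" using b by simp
      then show ?thesis using vp b by (simp add: field_simps)
    qed
    finally show ?thesis unfolding K_def by simp
  qed
  have hL: "((\<lambda>v. \<bar>?g' v\<bar> * ?f (?g v)) has_integral K * (sqrt pi / 2)) ?S"
    using has_integral_eq[OF _ hJ] eq by (metis (no_types, lifting))
  have absL: "(\<lambda>v. \<bar>?g' v\<bar> * ?f (?g v)) absolutely_integrable_on ?S"
    by (rule nonnegative_absolutely_integrable_1) (use hL in auto)
  have der: "(?g has_field_derivative ?g' v) (at v within ?S)" for v
    using b by (auto intro!: derivative_eq_intros simp: power2_eq_square)
  have inj: "inj_on ?g ?S"
  proof (rule inj_onI)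
    fix x y :: real assume "x \<in> ?S" "y \<in> ?S" "?g x = ?g y"
    then show "x = y" using b by (simp add: power2_eq_iff)
  qed
  have img: "?g ` ?S = ?S"
  proof
    show "?g ` ?S \<subseteq> ?S" using b by auto
    show "?S \<subseteq> ?g ` ?S"
    proof
      fix t :: real assume t: "t \<in> ?S"
      have "?g (sqrt (t*b)) = t" using t b by simp
      moreover have "sqrt (t*b) \<in> ?S" using t b by simp
      ultimately show "t \<in> ?g ` ?S" by (metis image_eqI)
    qed
  qed
  have Sleb: "?S \<in> sets lebesgue" by simp
  have L: "(\<lambda>v. \<bar>?g' v\<bar> * ?f (?g v)) absolutely_integrable_on ?S \<and>
      integral ?S (\<lambda>v. \<bar>?g' v\<bar> * ?f (?g v)) = K * (sqrt pi / 2)"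
    using absL integral_unique[OF hL] by blast
  have "?f absolutely_integrable_on (?g ` ?S) \<and> integral (?g ` ?S) ?f = K * (sqrt pi / 2)"
    using has_absolute_integral_change_of_variables_1'[OF Sleb der inj, of ?f "K * (sqrt pi / 2)"] L
    by blast
  then have "?f absolutely_integrable_on ?S \<and> integral ?S ?f = K * (sqrt pi / 2)"
    unfolding img .
  then have "(?f has_integral K * (sqrt pi / 2)) ?S"
    using absolutely_integrable_on_def has_integral_integrable_integral by fastforce
  moreover have "K * (sqrt pi / 2) = sqrt (pi/b) * exp (-2* sqrt(a*b))"
    unfolding K_def k_def by (simp add: real_sqrt_divide)
  ultimately show ?thesis by simp
qed


definition phi :: "real \<Rightarrow> real \<Rightarrow> real \<Rightarrow> real \<Rightarrow> real" where
  "phi c a b t = indicator {0<..} t * (c * (t powr (-1/2) * exp (-a/t - b*t)))"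

lemma phi_meas[measurable (raw)]:
  "f \<in> borel_measurable M \<Longrightarrow> (\<lambda>x. phi c a b (f x)) \<in> borel_measurable M"
proof -
  assume f: "f \<in> borel_measurable M"
  have "phi c a b \<in> borel_measurable borel" unfolding phi_def[abs_def] by measurable
  then show ?thesis using measurable_compose[OF f] by blast
qed

lemma phi_nonneg: "c \<ge> 0 \<Longrightarrow> phi c a b t \<ge> 0"
  unfolding phi_def by (simp add: indicator_def)

lemma phi_nn:
  assumes c: "c \<ge> 0" and a: "a \<ge> 0" and b: "b > 0"
  shows "(\<integral>\<^sup>+t. ennreal (phi c a b t) \<partial>lborel) = ennreal (c * (sqrt (pi/b) * exp (-2 * sqrt (a*b))))"
proof -
  have "(\<integral>\<^sup>+t. ennreal (phi c a b t) \<partial>lborel)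
      = (\<integral>\<^sup>+t. ennreal c * (ennreal (t powr (-1/2) * exp (-a/t - b*t)) * indicator {0<..} t) \<partial>lborel)"
    by (rule nn_integral_cong) (use c in \<open>auto simp: phi_def indicator_def ennreal_mult\<close>)
  also have "\<dots> = ennreal c * (\<integral>\<^sup>+t. ennreal (t powr (-1/2) * exp (-a/t - b*t)) * indicator {0<..} t \<partial>lborel)"
    by (rule nn_integral_cmult) measurable
  also have "(\<integral>\<^sup>+t. ennreal (t powr (-1/2) * exp (-a/t - b*t)) * indicator {0<..} t \<partial>lborel)
      = ennreal (sqrt (pi/b) * exp (-2 * sqrt (a*b)))"
    by (rule nn_integral_has_integral_lebesgue'[OF _ Ipow[OF a b]]) simp
  also have "ennreal c * ennreal (sqrt (pi/b) * exp (-2 * sqrt (a*b))) = ennreal (c * (sqrt (pi/b) * exp (-2 * sqrt (a*b))))"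
    by (rule ennreal_mult[symmetric]) (use c b in auto)
  finally show ?thesis .
qed

lemma Qj:
  fixes t g s y :: real
  assumes t: "t > 0" and g: "g > 0" and s: "s > 0"
  shows "normal_density 0 (sqrt (s\<^sup>2 * inverse (1/t + 1/g))) y * (t powr (-1/2) * (1/t + 1/g) powr (-1/2))
       = 1 / sqrt (2 * pi * s\<^sup>2) * t powr (-1/2) * exp (-(y\<^sup>2/(2 * s\<^sup>2))/t) * exp (-(y\<^sup>2/(2 * s\<^sup>2))/g)"
proof -
  define w where "w = 1/t + 1/g"
  have w: "w > 0" unfolding w_def using t g by (intro add_pos_pos) simp_all
  have sq: "(sqrt (s\<^sup>2 * inverse w))\<^sup>2 = s\<^sup>2 / w" using w by (simp add: field_simps)
  have pw: "w powr (-1/2) = 1 / sqrt w" using powr_mhalf[OF w] by simp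
  have c1: "1 / sqrt (2 * pi * (s\<^sup>2 / w)) * (1 / sqrt w) = 1 / sqrt (2 * pi * s\<^sup>2)"
  proof -
    have m: "2 * pi * (s\<^sup>2 / w) * w = 2 * pi * s\<^sup>2" using w by simp
    have "sqrt (2 * pi * (s\<^sup>2 / w)) * sqrt w = sqrt (2 * pi * s\<^sup>2)"
      by (simp only: real_sqrt_mult[symmetric] m)
    moreover have "1 / sqrt (2 * pi * (s\<^sup>2 / w)) * (1 / sqrt w) = 1 / (sqrt (2 * pi * (s\<^sup>2 / w)) * sqrt w)"
      by simp
    ultimately show ?thesis by simp
  qed
  have e1: "-(y - 0)\<^sup>2 / (2 * (s\<^sup>2 / w)) = -(y\<^sup>2/(2 * s\<^sup>2))/t + -(y\<^sup>2/(2 * s\<^sup>2))/g"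
    unfolding w_def using t g s by (simp add: field_simps)
  have "normal_density 0 (sqrt (s\<^sup>2 * inverse w)) y * (t powr (-1/2) * w powr (-1/2))
      = (1 / sqrt (2 * pi * (s\<^sup>2 / w)) * (1 / sqrt w)) * t powr (-1/2) * exp (-(y - 0)\<^sup>2 / (2 * (s\<^sup>2 / w)))"
    unfolding normal_density_def sq pw by simp
  also have "\<dots> = 1 / sqrt (2 * pi * s\<^sup>2) * t powr (-1/2) * exp (-(y\<^sup>2/(2 * s\<^sup>2))/t) * exp (-(y\<^sup>2/(2 * s\<^sup>2))/g)"
    unfolding c1 e1 exp_add by simp
  finally show ?thesis unfolding w_def .
qed

lemma norm_sq_vec: "(norm (x::real^'n))\<^sup>2 = (\<Sum>j\<in>UNIV. (x $ j)\<^sup>2)"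
  by (simp add: norm_vec_def L2_set_def sum_nonneg)


lemma expd: "exp ((u::real) - v) = exp u * exp (- v)"
  by (simp add: exp_diff exp_minus divide_inverse)

lemma Pt:
  fixes \<sigma> l1 l2 :: real and \<beta> :: "real^'n" and x :: "(real^'n) \<times> real"
  assumes s: "\<sigma> > 0"
  shows "cond_beta_density \<sigma> x \<beta> * prior_unnorm l1 l2 x =
     (\<Prod>j\<in>UNIV. phi (1 / sqrt (2 * pi * \<sigma>\<^sup>2)) ((\<beta>$j)\<^sup>2/(2 * \<sigma>\<^sup>2)) (l1\<^sup>2/2) (fst x $ j))
      * phi 1 ((norm \<beta>)\<^sup>2/(2 * \<sigma>\<^sup>2)) (l2\<^sup>2/2) (snd x)"
proof (cases x)
  case (Pair t g)
  define c0 where "c0 = 1 / sqrt (2 * pi * \<sigma>\<^sup>2)"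
  define a where "a j = (\<beta>$j)\<^sup>2/(2 * \<sigma>\<^sup>2)" for j
  define an where "an = (norm \<beta>)\<^sup>2/(2 * \<sigma>\<^sup>2)"
  define b1 where "b1 = l1\<^sup>2/2"
  define b2 where "b2 = l2\<^sup>2/2"
  show ?thesis
  proof (cases "(t,g) \<in> hyper_dom")
    case True
    then have tp: "\<And>j. t$j > 0" and gp: "g > 0" by (auto simp: hyper_dom_def)
    have san: "(\<Sum>j\<in>UNIV. a j) = an" unfolding a_def an_def norm_sq_vec by (simp add: sum_divide_distrib)
    have "cond_beta_density \<sigma> x \<beta> * prior_unnorm l1 l2 x =
      (\<Prod>j\<in>UNIV. normal_density 0 (sqrt (\<sigma>\<^sup>2 * inverse (1/t$j + 1/g))) (\<beta>$j) * ((t$j) powr (-1/2) * (1/t$j + 1/g) powr (-1/2)))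
       * (g powr (-1/2) * exp (-(l1\<^sup>2/2) * (\<Sum>j\<in>UNIV. t$j) - (l2\<^sup>2/2)*g))"
      using True unfolding Pair by (simp add: cond_beta_density_def prior_unnorm_def prod.distrib mult.assoc)
    also have "\<dots> = (\<Prod>j\<in>UNIV. c0 * (t$j) powr (-1/2) * exp (-a j/(t$j)) * exp (-a j/g))
       * (g powr (-1/2) * exp (-b1 * (\<Sum>j\<in>UNIV. t$j) - b2*g))"
      unfolding Qj[OF tp gp s] c0_def a_def b1_def b2_def ..
    also have "\<dots> = (\<Prod>j\<in>UNIV. c0 * (t$j) powr (-1/2) * exp (-a j/(t$j))) * exp (-an/g)
       * (g powr (-1/2) * ((\<Prod>j\<in>UNIV. exp (- (b1 * t$j))) * exp (- (b2*g))))"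
    proof -
      have "(\<Prod>j\<in>UNIV. exp (-a j/g)) = exp (-an/g)"
        by (simp add: exp_sum[symmetric] san[symmetric] sum_negf sum_divide_distrib)
      moreover have "exp (-b1 * (\<Sum>j\<in>UNIV. t$j) - b2*g) = (\<Prod>j\<in>UNIV. exp (- (b1 * t$j))) * exp (- (b2*g))"
        by (simp add: expd exp_sum[symmetric] sum_distrib_left sum_negf)
      ultimately show ?thesis by (simp add: prod.distrib)
    qed
    also have "\<dots> = (\<Prod>j\<in>UNIV. c0 * ((t$j) powr (-1/2) * exp (-a j/(t$j) - b1 * t$j)))
        * (1 * (g powr (-1/2) * exp (-an/g - b2*g)))"
      by (simp add: expd prod.distrib mult_ac)
    also have "\<dots> = (\<Prod>j\<in>UNIV. phi c0 (a j) b1 (t$j)) * phi 1 an b2 g"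
      using tp gp by (simp add: phi_def)
    finally show ?thesis unfolding Pair c0_def a_def an_def b1_def b2_def by simp
  next
    case False
    then have "prior_unnorm l1 l2 x = 0" unfolding Pair prior_unnorm_def by simp
    moreover have "(\<Prod>j\<in>UNIV. phi c0 (a j) b1 (t$j)) * phi 1 an b2 g = 0"
    proof (cases "g > 0")
      case True
      then obtain j where "\<not> t$j > 0" using False by (auto simp: hyper_dom_def)
      then have "phi c0 (a j) b1 (t$j) = 0" by (simp add: phi_def)
      then have "(\<Prod>j\<in>UNIV. phi c0 (a j) b1 (t$j)) = 0" by (intro prod_zero) auto
      then show ?thesis by simp
    next
      case False
      then show ?thesis by (simp add: phi_def)
    qed
    ultimately show ?thesis unfolding Pair c0_def a_def an_def b1_def b2_def by simp
  qed
qed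


lemma prior_nonneg: "0 \<le> prior_unnorm l1 l2 x"
  unfolding prior_unnorm_def by (cases x) (auto intro!: prod_nonneg mult_nonneg_nonneg)

lemma prior_le:
  assumes l1: "l1 > 0"
  shows "prior_unnorm l1 l2 x \<le> (\<Prod>j\<in>UNIV. erlang_density 0 (l1\<^sup>2/2) (fst x $ j) / (l1\<^sup>2/2)) * phi 1 0 (l2\<^sup>2/2) (snd x)"
proof (cases x)
  case (Pair t g)
  define b1 where "b1 = l1\<^sup>2/2"
  define b2 where "b2 = l2\<^sup>2/2"
  have b1: "b1 > 0" unfolding b1_def using l1 by simp
  have Rnn: "0 \<le> (\<Prod>j\<in>UNIV. erlang_density 0 b1 (t $ j) / b1) * phi 1 0 b2 g"
    using b1 by (intro mult_nonneg_nonneg prod_nonneg phi_nonneg divide_nonneg_pos) auto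
  show ?thesis
  proof (cases "(t,g) \<in> hyper_dom")
    case True
    then have tp: "\<And>j. t$j > 0" and gp: "g > 0" by (auto simp: hyper_dom_def)
    have T: "0 \<le> (t$j) powr (-1/2) * (1/t$j + 1/g) powr (-1/2) \<and> (t$j) powr (-1/2) * (1/t$j + 1/g) powr (-1/2) \<le> 1" for j
    proof -
      have tj: "t$j > 0" by (rule tp)
      have w: "1/t$j + 1/g > 0" using tj gp by (intro add_pos_pos) simp_all
      have "(t$j) powr (-1/2) * (1/t$j + 1/g) powr (-1/2) = 1 / sqrt (t$j * (1/t$j + 1/g))"
        using powr_mhalf[OF tj] powr_mhalf[OF w] by (simp add: real_sqrt_mult)
      moreover have "t$j * (1/t$j + 1/g) \<ge> 1"
        using tj gp by (simp add: field_simps)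
      ultimately show ?thesis by simp
    qed
    have R: "(\<Prod>j\<in>UNIV. erlang_density 0 b1 (t $ j) / b1) * phi 1 0 b2 g
        = (\<Prod>j\<in>UNIV. exp (- (b1 * t$j))) * (g powr (-1/2) * exp (- (b2 * g)))"
    proof -
      have e: "erlang_density 0 b1 (t $ j) / b1 = exp (- (b1 * t$j))" for j
      proof -
        have "\<not> t$j < 0" using tp[of j] by simp
        then show ?thesis using b1 by (simp add: erlang_density_def)
      qed
      show ?thesis using gp by (simp add: e phi_def)
    qed
    have "prior_unnorm l1 l2 x = (\<Prod>j\<in>UNIV. (t$j) powr (-1/2) * (1/t$j + 1/g) powr (-1/2))
        * ((\<Prod>j\<in>UNIV. exp (- (b1 * t$j))) * (g powr (-1/2) * exp (- (b2 * g))))"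
      using True unfolding Pair prior_unnorm_def b1_def b2_def
      by (simp add: expd exp_sum[symmetric] sum_distrib_left sum_distrib_right sum_negf mult_ac)
    also have "\<dots> \<le> 1 * ((\<Prod>j\<in>UNIV. exp (- (b1 * t$j))) * (g powr (-1/2) * exp (- (b2 * g))))"
      by (rule mult_right_mono) (use T in \<open>auto intro!: prod_le_1 mult_nonneg_nonneg prod_nonneg\<close>)
    finally show ?thesis using R unfolding Pair b1_def b2_def by simp
  next
    case False
    then have "prior_unnorm l1 l2 x = 0" unfolding Pair prior_unnorm_def by simp
    then show ?thesis using Rnn unfolding Pair b1_def b2_def by simp
  qed
qed

lemma sqf:
  assumes s: "s > 0" and l: "l > 0"
  shows "2 * sqrt (y\<^sup>2/(2 * s\<^sup>2) * (l\<^sup>2/2)) = l/s * \<bar>y\<bar>"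
proof -
  have "y\<^sup>2/(2 * s\<^sup>2) * (l\<^sup>2/2) = (l * \<bar>y\<bar> / (2 * s))\<^sup>2"
    using s by (simp add: power2_eq_square field_simps)
  moreover have "l * \<bar>y\<bar> / (2 * s) \<ge> 0" using s l by simp
  ultimately show ?thesis using s l by (simp add: abs_mult)
qed


lemma core:
  fixes \<sigma> l1 l2 :: real
  assumes "\<sigma> > 0" and "l1 > 0" and "l2 > 0"
  shows "integrable lborel (prior_unnorm l1 l2 :: (real^'n) \<times> real \<Rightarrow> real)
         \<and> 0 < integral\<^sup>L lborel (prior_unnorm l1 l2 :: (real^'n) \<times> real \<Rightarrow> real)
         \<and> (\<forall>Z'>0. \<exists>C > 0. \<forall>\<beta> :: real^'n.
              (\<integral>x. cond_beta_density \<sigma> x \<beta> * (prior_unnorm l1 l2 x / Z') \<partial>lborel)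
              = C * exp (- (l1 / \<sigma>) * (\<Sum>j\<in>UNIV. \<bar>\<beta> $ j\<bar>) - (l2 / \<sigma>) * norm \<beta>))"
proof -
  note s = assms(1) and l1 = assms(2) and l2 = assms(3)
  let ?pr = "prior_unnorm l1 l2 :: (real^'n) \<times> real \<Rightarrow> real"
  define b1 where "b1 = l1\<^sup>2/2"
  define b2 where "b2 = l2\<^sup>2/2"
  have b1: "b1 > 0" and b2: "b2 > 0" unfolding b1_def b2_def using l1 l2 by simp_all
  have meas: "?pr \<in> borel_measurable lborel" using meas_prior by simp
  have nn: "\<And>x. 0 \<le> ?pr x" by (rule prior_nonneg)
  define B where "B x = (\<Prod>j\<in>UNIV. erlang_density 0 b1 (fst x $ j) / b1) * phi 1 0 b2 (snd x)"
    for x :: "(real^'n) \<times> real"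
  have erl: "(\<integral>\<^sup>+s. ennreal (erlang_density 0 b1 s / b1) \<partial>lborel) = ennreal (1/b1)"
  proof -
    have "(\<integral>\<^sup>+s. ennreal (erlang_density 0 b1 s / b1) \<partial>lborel)
        = (\<integral>\<^sup>+s. ennreal (erlang_density 0 b1 s * s^0) * ennreal (1/b1) \<partial>lborel)"
      by (rule nn_integral_cong) (use b1 in \<open>simp add: ennreal_mult[symmetric] divide_inverse\<close>)
    also have "\<dots> = (\<integral>\<^sup>+s. ennreal (erlang_density 0 b1 s * s^0) \<partial>lborel) * ennreal (1/b1)"
      by (rule nn_integral_multc) measurable
    also have "\<dots> = ennreal (1/b1)"
      using nn_integral_erlang_ith_moment[OF b1, of 0 0] by simp
    finally show ?thesis .
  qed
  have Bfin: "(\<integral>\<^sup>+x. ennreal (B x) \<partial>lborel) < \<infinity>"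
  proof -
    have "(\<integral>\<^sup>+x. ennreal (B x) \<partial>lborel)
        = (\<integral>\<^sup>+(x::(real^'n) \<times> real). (\<Prod>j\<in>UNIV. ennreal (erlang_density 0 b1 (fst x $ j) / b1)) * ennreal (phi 1 0 b2 (snd x)) \<partial>lborel)"
      by (rule nn_integral_cong)
         (use b1 in \<open>simp add: B_def ennreal_mult prod_ennreal prod_nonneg phi_nonneg\<close>)
    also have "\<dots> = (\<integral>\<^sup>+(t::real^'n). (\<Prod>j\<in>UNIV. ennreal (erlang_density 0 b1 (t $ j) / b1)) \<partial>lborel)
                  * (\<integral>\<^sup>+g. ennreal (phi 1 0 b2 g) \<partial>lborel)"
      by (rule pair_prod_nn) measurable
    also have "\<dots> = (\<Prod>j\<in>(UNIV::'n set). ennreal (1/b1)) * ennreal (1 * (sqrt (pi/b2) * exp (-2 * sqrt (0*b2))))"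
    proof -
      have v: "(\<integral>\<^sup>+(t::real^'n). (\<Prod>j\<in>UNIV. ennreal (erlang_density 0 b1 (t $ j) / b1)) \<partial>lborel)
          = (\<Prod>j\<in>(UNIV::'n set). \<integral>\<^sup>+s. ennreal (erlang_density 0 b1 s / b1) \<partial>lborel)"
        by (rule vec_prod_nn[where f="\<lambda>j s. ennreal (erlang_density 0 b1 s / b1)"]) measurable
      show ?thesis unfolding v erl phi_nn[OF _ _ b2] using b2 by (simp add: phi_nn)
    qed
    also have "\<dots> < \<infinity>"
      by (simp add: ennreal_mult_less_top power_less_top_ennreal)
    finally show ?thesis .
  qed
  have Pfin: "(\<integral>\<^sup>+x. ennreal (?pr x) \<partial>lborel) < \<infinity>"
  proof -
    have "(\<integral>\<^sup>+x. ennreal (?pr x) \<partial>lborel) \<le> (\<integral>\<^sup>+x. ennreal (B x) \<partial>lborel)"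
      by (rule nn_integral_mono) (unfold B_def b1_def b2_def, rule ennreal_leI, rule prior_le[OF l1])
    then show ?thesis using Bfin by (simp add: le_less_trans)
  qed
  have int: "integrable lborel ?pr"
    by (rule integrableI_nonneg[OF meas]) (use nn Pfin in auto)
  define Z where "Z = integral\<^sup>L lborel ?pr"
  have Zeq: "Z = enn2real (\<integral>\<^sup>+x. ennreal (?pr x) \<partial>lborel)"
    unfolding Z_def by (rule integral_eq_nn_integral[OF meas]) (use nn in auto)
  define c0 where "c0 = 1 / sqrt (2 * pi * \<sigma>\<^sup>2)"
  define K where "K = (c0 * sqrt (pi/b1)) ^ CARD('n) * sqrt (pi/b2)"
  have K: "K > 0" unfolding K_def c0_def using b1 b2 s by simp
  define E where "E \<beta> = - (l1 / \<sigma>) * (\<Sum>j\<in>UNIV. \<bar>\<beta> $ j\<bar>) - (l2 / \<sigma>) * norm \<beta>" for \<beta> :: "real^'n"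
  define F where "F \<beta> x = (\<Prod>j\<in>UNIV. phi c0 ((\<beta>$j)\<^sup>2/(2 * \<sigma>\<^sup>2)) b1 (fst x $ j))
      * phi 1 ((norm \<beta>)\<^sup>2/(2 * \<sigma>\<^sup>2)) b2 (snd x)" for \<beta> :: "real^'n" and x :: "(real^'n) \<times> real"
  have c0: "c0 > 0" unfolding c0_def using s by simp
  have FP: "cond_beta_density \<sigma> x \<beta> * ?pr x = F \<beta> x" for \<beta> x
    unfolding F_def c0_def b1_def b2_def by (rule Pt[OF s])
  have Fnn: "0 \<le> F \<beta> x" for \<beta> x
    unfolding F_def using c0 by (intro mult_nonneg_nonneg prod_nonneg phi_nonneg) auto
  have Fmeas: "F \<beta> \<in> borel_measurable lborel" for \<beta>
  proof -
    have "F \<beta> \<in> borel_measurable (borel \<Otimes>\<^sub>M borel)" unfolding F_def[abs_def] by measurable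
    then show ?thesis by (simp add: borel_prod)
  qed
  have marg: "(\<integral>\<^sup>+x. ennreal (F \<beta> x) \<partial>lborel) = ennreal (K * exp (E \<beta>))" for \<beta>
  proof -
    have "(\<integral>\<^sup>+x. ennreal (F \<beta> x) \<partial>lborel)
        = (\<integral>\<^sup>+(x::(real^'n) \<times> real). (\<Prod>j\<in>UNIV. ennreal (phi c0 ((\<beta>$j)\<^sup>2/(2 * \<sigma>\<^sup>2)) b1 (fst x $ j)))
                 * ennreal (phi 1 ((norm \<beta>)\<^sup>2/(2 * \<sigma>\<^sup>2)) b2 (snd x)) \<partial>lborel)"
      by (rule nn_integral_cong)
         (use c0 in \<open>simp add: F_def ennreal_mult prod_ennreal prod_nonneg phi_nonneg\<close>)
    also have "\<dots> = (\<integral>\<^sup>+(t::real^'n). (\<Prod>j\<in>UNIV. ennreal (phi c0 ((\<beta>$j)\<^sup>2/(2 * \<sigma>\<^sup>2)) b1 (t $ j))) \<partial>lborel)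
                  * (\<integral>\<^sup>+g. ennreal (phi 1 ((norm \<beta>)\<^sup>2/(2 * \<sigma>\<^sup>2)) b2 g) \<partial>lborel)"
      by (rule pair_prod_nn) measurable
    also have "\<dots> = (\<Prod>j\<in>UNIV. ennreal (c0 * (sqrt (pi/b1) * exp (- (l1/\<sigma> * \<bar>\<beta>$j\<bar>)))))
                  * ennreal (1 * (sqrt (pi/b2) * exp (- (l2/\<sigma> * norm \<beta>))))"
    proof -
      have a: "(\<integral>\<^sup>+s. ennreal (phi c0 ((\<beta>$j)\<^sup>2/(2 * \<sigma>\<^sup>2)) b1 s) \<partial>lborel)
           = ennreal (c0 * (sqrt (pi/b1) * exp (- (l1/\<sigma> * \<bar>\<beta>$j\<bar>))))" for j
        using phi_nn[OF _ _ b1, of c0 "(\<beta>$j)\<^sup>2/(2 * \<sigma>\<^sup>2)"] c0 sqf[OF s l1, of "\<beta>$j"]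
        unfolding b1_def by simp
      have b: "(\<integral>\<^sup>+s. ennreal (phi 1 ((norm \<beta>)\<^sup>2/(2 * \<sigma>\<^sup>2)) b2 s) \<partial>lborel)
           = ennreal (1 * (sqrt (pi/b2) * exp (- (l2/\<sigma> * norm \<beta>))))"
        using phi_nn[OF _ _ b2, of 1 "(norm \<beta>)\<^sup>2/(2 * \<sigma>\<^sup>2)"] sqf[OF s l2, of "norm \<beta>"]
        unfolding b2_def by simp
      have v: "(\<integral>\<^sup>+(t::real^'n). (\<Prod>j\<in>UNIV. ennreal (phi c0 ((\<beta>$j)\<^sup>2/(2 * \<sigma>\<^sup>2)) b1 (t $ j))) \<partial>lborel)
          = (\<Prod>j\<in>UNIV. \<integral>\<^sup>+s. ennreal (phi c0 ((\<beta>$j)\<^sup>2/(2 * \<sigma>\<^sup>2)) b1 s) \<partial>lborel)"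
        by (rule vec_prod_nn[where f="\<lambda>j s. ennreal (phi c0 ((\<beta>$j)\<^sup>2/(2 * \<sigma>\<^sup>2)) b1 s)"]) measurable
      show ?thesis unfolding v a b ..
    qed
    also have "\<dots> = ennreal (K * exp (E \<beta>))"
    proof -
      have "(\<Prod>j\<in>UNIV. ennreal (c0 * (sqrt (pi/b1) * exp (- (l1/\<sigma> * \<bar>\<beta>$j\<bar>)))))
          = ennreal (\<Prod>j\<in>UNIV. c0 * (sqrt (pi/b1) * exp (- (l1/\<sigma> * \<bar>\<beta>$j\<bar>))))"
        by (rule prod_ennreal) (use c0 b1 in auto)
      also have "(\<Prod>j\<in>UNIV. c0 * (sqrt (pi/b1) * exp (- (l1/\<sigma> * \<bar>\<beta>$j\<bar>))))
          = (c0 * sqrt (pi/b1)) ^ CARD('n) * exp (- (l1 / \<sigma>) * (\<Sum>j\<in>UNIV. \<bar>\<beta> $ j\<bar>))"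
        by (simp add: prod.distrib exp_sum[symmetric] sum_distrib_left sum_negf mult.assoc power_mult_distrib)
      finally have p: "(\<Prod>j\<in>UNIV. ennreal (c0 * (sqrt (pi/b1) * exp (- (l1/\<sigma> * \<bar>\<beta>$j\<bar>)))))
          = ennreal ((c0 * sqrt (pi/b1)) ^ CARD('n) * exp (- (l1 / \<sigma>) * (\<Sum>j\<in>UNIV. \<bar>\<beta> $ j\<bar>)))" .
      have "K * exp (E \<beta>) = ((c0 * sqrt (pi/b1)) ^ CARD('n) * exp (- (l1 / \<sigma>) * (\<Sum>j\<in>UNIV. \<bar>\<beta> $ j\<bar>)))
           * (1 * (sqrt (pi/b2) * exp (- (l2/\<sigma> * norm \<beta>))))"
        unfolding K_def E_def by (simp add: expd mult_ac)
      then show ?thesis unfolding p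
        using c0 b1 b2 by (simp add: ennreal_mult[symmetric])
    qed
    finally show ?thesis .
  qed
  have Zpos: "Z > 0"
  proof (rule ccontr)
    assume "\<not> Z > 0"
    moreover have "Z \<ge> 0" unfolding Z_def using nn by simp
    ultimately have "Z = 0" by simp
    then have "(\<integral>\<^sup>+x. ennreal (?pr x) \<partial>lborel) = 0"
      using Zeq Pfin by (auto simp: enn2real_eq_0_iff)
    then have "AE x in lborel. ennreal (?pr x) = 0"
      by (subst (asm) nn_integral_0_iff_AE) (use meas in auto)
    then have "AE x in lborel. ennreal (F 0 x) = 0"
      by eventually_elim (metis FP mult_zero_right ennreal_0 ennreal_eq_0_iff nn order_antisym)
    then have "(\<integral>\<^sup>+x. ennreal (F 0 x) \<partial>lborel) = 0"
      by (subst nn_integral_cong_AE[where v="\<lambda>_. 0"]) auto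
    then show False using marg[of 0] K by simp
  qed
  have main: "(\<integral>x. cond_beta_density \<sigma> x \<beta> * (?pr x / Z') \<partial>lborel) = K / Z' * exp (E \<beta>)" for \<beta> Z'
  proof -
    have "(\<integral>x. cond_beta_density \<sigma> x \<beta> * (?pr x / Z') \<partial>lborel) = (\<integral>x. F \<beta> x / Z' \<partial>lborel)"
      by (rule Bochner_Integration.integral_cong) (simp_all add: FP[symmetric])
    also have "\<dots> = (\<integral>x. F \<beta> x \<partial>lborel) / Z'" by simp
    also have "(\<integral>x. F \<beta> x \<partial>lborel) = K * exp (E \<beta>)"
      using integral_eq_nn_integral[OF Fmeas] Fnn marg K by simp
    finally show ?thesis by simp
  qed
  show ?thesis
  proof (intro conjI allI impI)
    show "integrable lborel ?pr" by (rule int)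
    show "0 < integral\<^sup>L lborel ?pr" using Zpos unfolding Z_def .
    fix Z' :: real assume Z': "Z' > 0"
    show "\<exists>C > 0. \<forall>\<beta> :: real^'n.
              (\<integral>x. cond_beta_density \<sigma> x \<beta> * (?pr x / Z') \<partial>lborel)
              = C * exp (- (l1 / \<sigma>) * (\<Sum>j\<in>UNIV. \<bar>\<beta> $ j\<bar>) - (l2 / \<sigma>) * norm \<beta>)"
      using main K Z' unfolding E_def by (intro exI[of _ "K / Z'"]) auto
  qed
qed

lemma core_pos:
  assumes "l1 > 0" and "l2 > 0"
  shows "0 < integral\<^sup>L lborel (prior_unnorm l1 l2 :: (real^'n) \<times> real \<Rightarrow> real)"
  by (rule conjunct1[OF conjunct2[OF core[of 1 l1 l2]]]) (use assms in auto)

theorem mainTheorem6: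
  fixes \<sigma> l1 l2 :: real
  assumes "\<sigma> > 0" and "l1 > 0" and "l2 > 0"
  shows "integrable lborel (prior_unnorm l1 l2 :: (real^'n) \<times> real \<Rightarrow> real)
         \<and> 0 < integral\<^sup>L lborel (prior_unnorm l1 l2 :: (real^'n) \<times> real \<Rightarrow> real)
         \<and> (\<exists>C > 0. \<forall>\<beta> :: real^'n.
              (\<integral>x. cond_beta_density \<sigma> x \<beta> *
                   (prior_unnorm l1 l2 x / integral\<^sup>L lborel (prior_unnorm l1 l2)) \<partial>lborel)
              = C * exp (- (l1 / \<sigma>) * (\<Sum>j\<in>UNIV. \<bar>\<beta> $ j\<bar>) - (l2 / \<sigma>) * norm \<beta>))"
proof -
  have c: "integrable lborel (prior_unnorm l1 l2 :: (real^'n) \<times> real \<Rightarrow> real)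
         \<and> 0 < integral\<^sup>L lborel (prior_unnorm l1 l2 :: (real^'n) \<times> real \<Rightarrow> real)
         \<and> (\<forall>Z'>0. \<exists>C > 0. \<forall>\<beta> :: real^'n.
              (\<integral>x. cond_beta_density \<sigma> x \<beta> * (prior_unnorm l1 l2 x / Z') \<partial>lborel)
              = C * exp (- (l1 / \<sigma>) * (\<Sum>j\<in>UNIV. \<bar>\<beta> $ j\<bar>) - (l2 / \<sigma>) * norm \<beta>))"
    by (rule core[OF assms])
  show ?thesis
    apply (intro conjI)
      apply (rule conjunct1[OF c])
     apply (rule conjunct1[OF conjunct2[OF c]])
    apply (rule mp[OF spec[OF conjunct2[OF conjunct2[OF c]]]])
    apply (rule core_pos[OF assms(2,3)])
    done
qed


end
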